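(* Let $n\ge 1$ and let $w\in\mathbb{R}^{[n]\times[n]}$ be a real matrix. Let $(\beta_1,\dots,\beta_n)$ be the numbers $\left(\max_{j\in[n]}(w_{i,j}-w_{i,i})\right)_{i\in[n]}$ arranged in non-increasing order, i.e. $\beta_1\ge\beta_2\ge\dots\ge\beta_n$. Let $\mathbf{p}^*=(p^*_1,\dots,p^*_n)$ be the minimum subsidy vector for $w$. Then for every $r=1,2,\dots,n$, the $r$-th largest value among $p^*_1,\dots,p^*_n$ is at most $\sum_{\ell=1}^{n-r}\beta_\ell$ (an empty sum being $0$).
   Context: For a permutation $\sigma$ of $[n]=\{1,\dots,n\}$ let $P^\sigma=\{\mathbf{p}\in\mathbb{R}_{\ge0}^n \mid w_{i,\sigma(i)}+p_{\sigma(i)}\ge w_{i,j}+p_j \ \forall i,j\in[n]\}$. A permutation $\sigma$ is a maximum weight permutation for $w$ if it maximizes $\sum_{i=1}^n w_{i,\sigma(i)}$. For a maximum weight permutation $\sigma$, $P^\sigma$ is nonempty and has a unique coordinatewise-minimal element; this element does not depend on the choice of the maximum weight permutation $\sigma$, and it is called the minimum subsidy vector for $w$. (The identity permutation need not be a maximum weight permutation.) *)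

theory Defs
  imports Complex_Main "HOL-Combinatorics.Permutations"
begin

text \<open>Indices range over [n] = {1..n}. A weight matrix is w :: nat => nat => real,
  a price/subsidy vector is p :: nat => real (only values on {1..n} matter).\<close>

definition subsidy_polytope :: "nat \<Rightarrow> (nat \<Rightarrow> nat \<Rightarrow> real) \<Rightarrow> (nat \<Rightarrow> nat) \<Rightarrow> (nat \<Rightarrow> real) set" where
  "subsidy_polytope n w \<sigma> =
     {p. (\<forall>i\<in>{1..n}. 0 \<le> p i) \<and>
         (\<forall>i\<in>{1..n}. \<forall>j\<in>{1..n}. w i (\<sigma> i) + p (\<sigma> i) \<ge> w i j + p j)}"

definition max_weight_perm :: "nat \<Rightarrow> (nat \<Rightarrow> nat \<Rightarrow> real) \<Rightarrow> (nat \<Rightarrow> nat) \<Rightarrow> bool" where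
  "max_weight_perm n w \<sigma> \<longleftrightarrow> \<sigma> permutes {1..n} \<and>
     (\<forall>\<tau>. \<tau> permutes {1..n} \<longrightarrow> (\<Sum>i\<in>{1..n}. w i (\<tau> i)) \<le> (\<Sum>i\<in>{1..n}. w i (\<sigma> i)))"

definition is_min_subsidy_vector :: "nat \<Rightarrow> (nat \<Rightarrow> nat \<Rightarrow> real) \<Rightarrow> (nat \<Rightarrow> real) \<Rightarrow> bool" where
  "is_min_subsidy_vector n w p \<longleftrightarrow>
     (\<exists>\<sigma>. max_weight_perm n w \<sigma> \<and> p \<in> subsidy_polytope n w \<sigma> \<and>
        (\<forall>q\<in>subsidy_polytope n w \<sigma>. \<forall>i\<in>{1..n}. p i \<le> q i))"

definition sorted_desc_vals :: "nat \<Rightarrow> (nat \<Rightarrow> real) \<Rightarrow> real list" where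
  "sorted_desc_vals n f = rev (sort (map f [1..<n+1]))"

definition beta_val :: "nat \<Rightarrow> (nat \<Rightarrow> nat \<Rightarrow> real) \<Rightarrow> nat \<Rightarrow> real" where
  "beta_val n w i = Max ((\<lambda>j. w i j - w i i) ` {1..n})"

end

theory Submission
  imports Defs
begin

lemma beta_ge: "j \<in> {1..n} \<Longrightarrow> w a j - w a a \<le> beta_val n w a"
  unfolding beta_val_def by (rule Max_ge) auto
lemma beta_nn: "a \<in> {1..n} \<Longrightarrow> 0 \<le> beta_val n w a"
  using beta_ge[of a n w a] by simp

lemma zero_lemma:
  assumes n: "n \<ge> 1" and perm: "\<sigma> permutes {1..n}" and pP: "p \<in> subsidy_polytope n w \<sigma>"
    and minp: "\<forall>q\<in>subsidy_polytope n w \<sigma>. \<forall>i\<in>{1..n}. p i \<le> q i"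
  shows "\<exists>k\<in>{1..n}. p k \<le> 0"
proof (rule ccontr)
  assume H: "\<not> ?thesis"
  define e where "e = Min (p ` {1..n})"
  have e_in: "e \<in> p ` {1..n}" unfolding e_def using n by (intro Min_in) auto
  have epos: "e > 0" using e_in H by force
  have ele: "\<And>i. i \<in> {1..n} \<Longrightarrow> e \<le> p i" unfolding e_def by (rule Min_le) auto
  define q where "q = (\<lambda>k. p k - e)"
  have "q \<in> subsidy_polytope n w \<sigma>"
    using pP ele unfolding subsidy_polytope_def q_def by auto
  with minp n have "p 1 \<le> q 1" by auto
  with epos show False unfolding q_def by simp
qed

lemma key_lemma:
  assumes perm: "\<sigma> permutes {1..n}" and pP: "p \<in> subsidy_polytope n w \<sigma>"
    and minp: "\<forall>q\<in>subsidy_polytope n w \<sigma>. \<forall>i\<in>{1..n}. p i \<le> q i"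
    and k0: "k0 \<in> {1..n}" "p k0 \<le> s" and u0: "u0 \<in> {1..n}" "s < p u0"
  shows "\<exists>a\<in>{1..n}. s < p a \<and> p a \<le> s + beta_val n w a"
proof (rule ccontr)
  assume H0: "\<not> ?thesis"
  have H: "\<And>a. a \<in> {1..n} \<Longrightarrow> s < p a \<Longrightarrow> s + beta_val n w a < p a" using H0 by force
  have sig: "\<And>i. i \<in> {1..n} \<Longrightarrow> \<sigma> i \<in> {1..n}" using perm by (metis permutes_in_image)
  have pnn: "\<And>i. i \<in> {1..n} \<Longrightarrow> 0 \<le> p i" using pP unfolding subsidy_polytope_def by auto
  have con: "\<And>i j. i \<in> {1..n} \<Longrightarrow> j \<in> {1..n} \<Longrightarrow> w i j + p j \<le> w i (\<sigma> i) + p (\<sigma> i)"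
    using pP unfolding subsidy_polytope_def by auto
  define U where "U = {a\<in>{1..n}. s < p a}"
  show False
  proof (cases "\<exists>a\<in>{1..n}. s < p a \<and> p (\<sigma> a) \<le> s")
    case True
    then obtain a where a: "a \<in> {1..n}" "s < p a" "p (\<sigma> a) \<le> s" by blast
    have "w a a + p a \<le> w a (\<sigma> a) + p (\<sigma> a)" using con[OF a(1) a(1)] .
    moreover have "w a (\<sigma> a) - w a a \<le> beta_val n w a" using beta_ge[OF sig[OF a(1)]] .
    ultimately have "p a \<le> s + beta_val n w a" using a by linarith
    with H[OF a(1) a(2)] show False by linarith
  next
    case False
    have sU: "\<sigma> ` U \<subseteq> U"
    proof
      fix x assume "x \<in> \<sigma> ` U"
      then obtain a where a: "a \<in> U" "x = \<sigma> a" by blast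
      hence "a \<in> {1..n}" "s < p a" by (auto simp: U_def)
      with False have "s < p (\<sigma> a)" by force
      with sig[OF \<open>a \<in> {1..n}\<close>] a show "x \<in> U" by (simp add: U_def)
    qed
    have injs: "inj \<sigma>" using perm by (rule permutes_inj)
    have "\<sigma> ` U = U"
      proof (rule endo_inj_surj)
      show "finite U" by (simp add: U_def)
      show "\<sigma> ` U \<subseteq> U" by (rule sU)
      show "inj_on \<sigma> U" using injs by (simp add: inj_on_def inj_def)
    qed
    hence bk: "\<And>i. \<sigma> i \<in> U \<Longrightarrow> i \<in> U"
      using injs by (metis image_iff injD)
    define Lw where "Lw = {j\<in>{1..n}. p j \<le> s}"
    define E where "E = (\<lambda>a. p a - s) ` U \<union> (\<lambda>(i,j). w i (\<sigma> i) + p (\<sigma> i) - w i j - p j) ` (U \<times> Lw)"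
    define e where "e = Min E"
    have finE: "finite E" unfolding E_def U_def Lw_def by auto
    have u0U: "u0 \<in> U" using u0 by (simp add: U_def)
    have Epos: "\<And>x. x \<in> E \<Longrightarrow> 0 < x"
    proof -
      fix x assume "x \<in> E"
      then consider (a) a where "a \<in> U" "x = p a - s"
        | (b) i j where "i \<in> U" "j \<in> Lw" "x = w i (\<sigma> i) + p (\<sigma> i) - w i j - p j"
        unfolding E_def by auto
      then show "0 < x"
      proof cases
        case a then show ?thesis by (simp add: U_def)
      next
        case b
        have i: "i \<in> {1..n}" "s < p i" using b by (auto simp: U_def)
        have j: "j \<in> {1..n}" "p j \<le> s" using b by (auto simp: Lw_def)
        have "w i i + p i \<le> w i (\<sigma> i) + p (\<sigma> i)" using con[OF i(1) i(1)] .
        moreover have "w i j - w i i \<le> beta_val n w i" using beta_ge[OF j(1)] .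
        moreover note H[OF i]
        ultimately show ?thesis using b j by linarith
      qed
    qed
    have eE: "e \<in> E" unfolding e_def using finE u0U by (intro Min_in) (auto simp: E_def)
    have epos: "0 < e" using Epos eE by blast
    have ele: "\<And>x. x \<in> E \<Longrightarrow> e \<le> x" unfolding e_def using finE by (rule Min_le)
    have e1: "\<And>a. a \<in> U \<Longrightarrow> e \<le> p a - s" using ele unfolding E_def by blast
    have e2: "\<And>i j. i \<in> U \<Longrightarrow> j \<in> Lw \<Longrightarrow> e \<le> w i (\<sigma> i) + p (\<sigma> i) - w i j - p j"
      using ele unfolding E_def by force
    have s0: "0 \<le> s" using k0 pnn by force
    define q where "q = (\<lambda>k. if k \<in> U then p k - e else p k)"
    have "q \<in> subsidy_polytope n w \<sigma>"
      unfolding subsidy_polytope_def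
    proof (intro CollectI conjI ballI)
      fix i assume i: "i \<in> {1..n}"
      show "0 \<le> q i" using e1[of i] s0 pnn[OF i] by (auto simp: q_def)
    next
      fix i j assume i: "i \<in> {1..n}" and j: "j \<in> {1..n}"
      show "w i j + q j \<le> w i (\<sigma> i) + q (\<sigma> i)"
      proof (cases "\<sigma> i \<in> U")
        case True
        note iU = bk[OF True]
        show ?thesis
        proof (cases "j \<in> U")
          case True then show ?thesis using \<open>\<sigma> i \<in> U\<close> con[OF i j] by (simp add: q_def)
        next
          case False
          hence "j \<in> Lw" using j by (auto simp: U_def Lw_def)
          from e2[OF iU this] show ?thesis using False \<open>\<sigma> i \<in> U\<close> by (simp add: q_def)
        qed
      next
        case False
        then show ?thesis using con[OF i j] epos by (auto simp: q_def)
      qed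
    qed
    with minp u0 have "p u0 \<le> q u0" by auto
    with epos u0U show False by (simp add: q_def)
  qed
qed


lemma grow:
  fixes p b :: "nat \<Rightarrow> real"
  assumes Z: "\<exists>k\<in>{1..n}. p k \<le> 0"
    and K: "\<And>s k u. k \<in> {1..n} \<Longrightarrow> p k \<le> s \<Longrightarrow> u \<in> {1..n} \<Longrightarrow> s < p u \<Longrightarrow>
              \<exists>a\<in>{1..n}. s < p a \<and> p a \<le> s + b a"
    and bnn: "\<And>a. a \<in> {1..n} \<Longrightarrow> 0 \<le> b a"
  shows "m < n \<Longrightarrow> \<exists>A\<subseteq>{1..n}. card A \<le> m \<and> (\<forall>a\<in>A. p a \<le> sum b A) \<and>
            m + 1 \<le> card {k\<in>{1..n}. p k \<le> sum b A}"
proof (induction m)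
  case 0
  from Z obtain k where k: "k \<in> {1..n}" "p k \<le> 0" by blast
  have "k \<in> {k\<in>{1..n}. p k \<le> sum b {}}" using k by simp
  hence "{k\<in>{1..n}. p k \<le> sum b {}} \<noteq> {}" by blast
  hence "0 < card {k\<in>{1..n}. p k \<le> sum b {}}" by (simp add: card_gt_0_iff)
  then show ?case by (intro exI[of _ "{}"]) auto
next
  case (Suc m)
  then obtain A where A: "A \<subseteq> {1..n}" "card A \<le> m" "\<forall>a\<in>A. p a \<le> sum b A"
    "m + 1 \<le> card {k\<in>{1..n}. p k \<le> sum b A}" by auto
  define s where "s = sum b A"
  define D where "D = {k\<in>{1..n}. p k \<le> s}"
  show ?case
  proof (cases "Suc m + 1 \<le> card D")
    case True
    then show ?thesis using A by (intro exI[of _ A]) (auto simp: s_def D_def)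
  next
    case False
    hence cD: "card D = m + 1" using A(4) by (simp add: s_def D_def)
    have "D \<noteq> {1..n}" using cD Suc.prems by auto
    then obtain u where u: "u \<in> {1..n}" "s < p u" unfolding D_def by force
    have "D \<noteq> {}" using cD by auto
    then obtain k where k: "k \<in> {1..n}" "p k \<le> s" unfolding D_def by auto
    obtain a where a: "a \<in> {1..n}" "s < p a" "p a \<le> s + b a" using K[OF k u] by blast
    have aA: "a \<notin> A" using a A(3) s_def by force
    have finA: "finite A" using A(1) finite_subset by blast
    have sum': "sum b (insert a A) = b a + s" using aA finA by (simp add: s_def)
    have cA': "card (insert a A) \<le> Suc m" using aA finA A(2) by simp
    have pA': "\<forall>x\<in>insert a A. p x \<le> sum b (insert a A)"
      using A(3) a bnn[OF a(1)] sum' by (auto simp: s_def)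
    have sub: "insert a D \<subseteq> {k\<in>{1..n}. p k \<le> sum b (insert a A)}"
      using a bnn[OF a(1)] sum' by (auto simp: D_def)
    have aD: "a \<notin> D" using a by (simp add: D_def)
    have "card (insert a D) = Suc m + 1" using aD cD by (simp add: D_def)
    moreover have "card (insert a D) \<le> card {k\<in>{1..n}. p k \<le> sum b (insert a A)}" 
      using card_mono[OF _ sub] by simp
    ultimately have "Suc m + 1 \<le> card {k\<in>{1..n}. p k \<le> sum b (insert a A)}" by linarith
    then show ?thesis using cA' pA' A(1) a(1) by (intro exI[of _ "insert a A"]) auto
  qed
qed

lemma sorted_le:
  fixes p :: "nat \<Rightarrow> real"
  assumes r: "r \<in> {1..n}" and c: "n - r + 1 \<le> card {k\<in>{1..n}. p k \<le> c}"
  shows "sorted_desc_vals n p ! (r - 1) \<le> c"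
proof (rule ccontr)
  assume H: "\<not> ?thesis"
  define ys where "ys = sort (map p [1..<n+1])"
  have ly: "length ys = n" by (simp add: ys_def)
  have sy: "sorted ys" by (simp add: ys_def)
  have "sorted_desc_vals n p ! (r - 1) = ys ! (n - r)"
    unfolding sorted_desc_vals_def ys_def[symmetric]
  proof -
    have "r - 1 < length ys" using r ly by auto
    hence "rev ys ! (r - 1) = ys ! (length ys - Suc (r - 1))" by (rule rev_nth)
    also have "length ys - Suc (r - 1) = n - r" using r ly by auto
    finally show "rev ys ! (r - 1) = ys ! (n - r)" .
  qed
  with H have gt: "c < ys ! (n - r)" by simp
  have "length (filter (\<lambda>x. x \<le> c) ys) = length (filter (\<lambda>x. x \<le> c) (map p [1..<n+1]))"
    unfolding ys_def by (metis filter_sort length_sort)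
  also have "\<dots> = length (filter (\<lambda>k. p k \<le> c) [1..<n+1])" by (simp add: filter_map o_def)
  also have "\<dots> = card {k\<in>{1..n}. p k \<le> c}"
    by (subst distinct_card[symmetric]) (auto intro!: arg_cong[where f=card])
  finally have eq: "length (filter (\<lambda>x. x \<le> c) ys) = card {k\<in>{1..n}. p k \<le> c}" .
  have "{i. i < length ys \<and> ys ! i \<le> c} \<subseteq> {..<n - r}"
  proof
    fix i assume i: "i \<in> {i. i < length ys \<and> ys ! i \<le> c}"
    show "i \<in> {..<n - r}"
    proof (rule ccontr)
      assume "i \<notin> {..<n - r}"
      hence "ys ! (n - r) \<le> ys ! i" using i sy by (auto intro!: sorted_nth_mono)
      with i gt show False by auto
    qed
  qed
  hence "card {i. i < length ys \<and> ys ! i \<le> c} \<le> n - r"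
    by (metis card_lessThan card_mono finite_lessThan)
  with eq c show False by (simp add: length_filter_conv_card)
qed



lemma map_insort_key: "map f (insort_key f x xs) = insort (f x) (map f xs)"
  by (induction xs) auto

lemma map_sort_key: "map f (sort_key f xs) = sort (map f xs)"
  by (induction xs) (auto simp: map_insort_key)

lemma topsum:
  fixes b :: "nat \<Rightarrow> real"
  assumes A: "A \<subseteq> {1..n}" "card A \<le> m" "m \<le> n"
    and bnn: "\<And>a. a \<in> {1..n} \<Longrightarrow> 0 \<le> b a"
  shows "sum b A \<le> (\<Sum>l = 1..m. sorted_desc_vals n b ! (l - 1))"
proof -
  define K where "K = rev (sort_key b [1..<n+1])"
  have mapK: "map b K = sorted_desc_vals n b"
    unfolding K_def sorted_desc_vals_def by (simp del: upt_Suc add: rev_map[symmetric] map_sort_key)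
  have lK: "length K = n" by (simp add: K_def)
  have dK: "distinct K" by (simp add: K_def)
  have setK: "set K = {1..n}" by (auto simp: K_def)
  have srt: "sorted (rev (map b K))" unfolding K_def by (simp add: rev_map[symmetric])
  have mono: "\<And>i j. i \<le> j \<Longrightarrow> j < n \<Longrightarrow> b (K ! j) \<le> b (K ! i)"
    using sorted_rev_nth_mono[OF srt] lK by fastforce
  define T where "T = (!) K ` {..<m}"
  have injK: "inj_on ((!) K) {..<m}" using dK lK A(3) by (intro inj_on_nth) auto
  have "(\<Sum>l = 1..m. sorted_desc_vals n b ! (l - 1)) = (\<Sum>i<m. sorted_desc_vals n b ! i)"
    by (simp add: sum.atLeast1_atMost_eq)
  also have "\<dots> = (\<Sum>i<m. b (K ! i))" using lK A(3)
    by (intro sum.cong) (auto simp: mapK[symmetric])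
  also have "\<dots> = sum b T" unfolding T_def by (simp add: sum.reindex[OF injK])
  finally have rhs: "(\<Sum>l = 1..m. sorted_desc_vals n b ! (l - 1)) = sum b T" .
  have cT: "card T = m" unfolding T_def using card_image[OF injK] by simp
  have TS: "T \<subseteq> {1..n}" unfolding T_def using setK lK A(3) by auto
  have finA: "finite A" using A(1) finite_subset by blast
  have finT: "finite T" unfolding T_def by simp
  have cmp: "\<And>x y. x \<in> A - T \<Longrightarrow> y \<in> T \<Longrightarrow> b x \<le> b y"
  proof -
    fix x y assume x: "x \<in> A - T" and y: "y \<in> T"
    obtain i where i: "i < m" "y = K ! i" using y unfolding T_def by auto
    have "x \<in> set K" using x A(1) setK by auto
    then obtain j where j: "j < n" "x = K ! j" using lK by (metis in_set_conv_nth)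
    have "\<not> j < m" using x j unfolding T_def by auto
    then show "b x \<le> b y" using mono[of i j] i j by simp
  qed
  have cardA: "card A = card (A \<inter> T) + card (A - T)"
    using finA by (metis Int_commute card_Diff_subset_Int Diff_Diff_Int card_Int_Diff[OF finA])
  have sA: "sum b A = sum b (A \<inter> T) + sum b (A - T)"
    using finA by (metis sum.Int_Diff)
  have sT: "sum b T = sum b (A \<inter> T) + sum b (T - A)"
    using finT by (metis sum.Int_Diff Int_commute)
  have cardT: "card T = card (A \<inter> T) + card (T - A)"
    using finT by (metis Int_commute card_Int_Diff)
  have "sum b (A - T) \<le> sum b (T - A)"
  proof (cases "T - A = {}")
    case True
    hence "T \<subseteq> A" by blast
    hence "A = T" using card_seteq[OF finA _ ] A(2) cT by (metis card_seteq)
    then show ?thesis by simp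
  next
    case False
    define c where "c = Min (b ` (T - A))"
    have c1: "\<And>y. y \<in> T - A \<Longrightarrow> c \<le> b y" unfolding c_def using finT by (intro Min_le) auto
    have cin: "c \<in> b ` (T - A)" unfolding c_def using finT False by (intro Min_in) auto
    have c0: "0 \<le> c" using cin TS bnn by auto
    have c2: "\<And>x. x \<in> A - T \<Longrightarrow> b x \<le> c" using cin cmp by auto
    have "sum b (A - T) \<le> of_nat (card (A - T)) * c"
      using sum_bounded_above[of "A - T" b c] c2 by simp
    also have "\<dots> \<le> of_nat (card (T - A)) * c"
      using cardA cardT A(2) cT c0 by (intro mult_right_mono) auto
    also have "\<dots> \<le> sum b (T - A)"
      using sum_bounded_below[of "T - A" c b] c1 by simp
    finally show ?thesis .
  qed
  then show ?thesis using rhs sA sT by linarith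
qed

theorem lemma3:
  fixes n :: nat and w :: "nat \<Rightarrow> nat \<Rightarrow> real" and p :: "nat \<Rightarrow> real"
  assumes "n \<ge> 1"
    and "is_min_subsidy_vector n w p"
  shows "\<forall>r\<in>{1..n}. sorted_desc_vals n p ! (r - 1)
           \<le> (\<Sum>l = 1..n - r. sorted_desc_vals n (beta_val n w) ! (l - 1))"
proof
  fix r assume r: "r \<in> {1..n}"
  obtain \<sigma> where mw: "max_weight_perm n w \<sigma>" and pP: "p \<in> subsidy_polytope n w \<sigma>"
    and minp: "\<forall>q\<in>subsidy_polytope n w \<sigma>. \<forall>i\<in>{1..n}. p i \<le> q i"
    using assms(2) unfolding is_min_subsidy_vector_def by blast
  have perm: "\<sigma> permutes {1..n}" using mw unfolding max_weight_perm_def by blast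
  have Z: "\<exists>k\<in>{1..n}. p k \<le> 0" by (rule zero_lemma[OF assms(1) perm pP minp])
  have K: "\<And>s k u. k \<in> {1..n} \<Longrightarrow> p k \<le> s \<Longrightarrow> u \<in> {1..n} \<Longrightarrow> s < p u \<Longrightarrow>
              \<exists>a\<in>{1..n}. s < p a \<and> p a \<le> s + beta_val n w a"
    using key_lemma[OF perm pP minp] by blast
  have bnn: "\<And>a. a \<in> {1..n} \<Longrightarrow> 0 \<le> beta_val n w a" by (rule beta_nn)
  define m where "m = n - r"
  have mn: "m < n" using r by (auto simp: m_def)
  have ex: "\<exists>A\<subseteq>{1..n}. card A \<le> m \<and> (\<forall>a\<in>A. p a \<le> sum (beta_val n w) A) \<and>
            m + 1 \<le> card {k\<in>{1..n}. p k \<le> sum (beta_val n w) A}"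
    by (rule grow[OF Z K bnn mn])
  then obtain A where A: "A \<subseteq> {1..n}" "card A \<le> m" "m + 1 \<le> card {k\<in>{1..n}. p k \<le> sum (beta_val n w) A}"
    by (elim exE conjE) simp
  define S where "S = (\<Sum>l = 1..m. sorted_desc_vals n (beta_val n w) ! (l - 1))"
  have "sum (beta_val n w) A \<le> S" unfolding S_def
    using topsum[OF A(1) A(2) _ bnn] mn by simp
  hence "{k\<in>{1..n}. p k \<le> sum (beta_val n w) A} \<subseteq> {k\<in>{1..n}. p k \<le> S}" by auto
  hence "card {k\<in>{1..n}. p k \<le> sum (beta_val n w) A} \<le> card {k\<in>{1..n}. p k \<le> S}"
    by (intro card_mono) auto
  with A(3) have "n - r + 1 \<le> card {k\<in>{1..n}. p k \<le> S}" by (simp add: m_def)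
  from sorted_le[OF r this] have fin: "sorted_desc_vals n p ! (r - 1) \<le> S" .
  then show "sorted_desc_vals n p ! (r - 1) \<le> (\<Sum>l = 1..n - r. sorted_desc_vals n (beta_val n w) ! (l - 1))"
    unfolding S_def m_def .
qed

end
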